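(* Let $(M,\cdot,1)$ be a monoid, $\Sigma$ a finite alphabet, and $A=(Q,\Sigma,u,i_u,\delta,w,\rho)$ an $M$-DFA. If $A$ is minimal then: 1. $A$ is accessible; 2. for all $p,q\in Q$: if there exists $m\in M$ with $m\cdot\mathcal{A}_p=\mathcal{A}_q$ or $\mathcal{A}_p=m\cdot\mathcal{A}_q$, then $p=q$; 3. for all $p,q\in Q$: if $\mathcal{A}_p=\mathcal{A}_q$ then $p=q$.
   Context: An $M$-DFA is $A=(Q,\Sigma,u,i_u,\delta,w,\rho)$ with $Q$ finite nonempty, initial state $u$, initial value $i_u\in M$, $\delta:Q\times\Sigma\to Q$, $w:Q\times\Sigma\to M$, $\rho:Q\to M$. Write $q\alpha$ for the extension of $\delta$ to words ($q\varepsilon=q$, $q(\alpha\sigma)=\delta(q\alpha,\sigma)$) and $w^*(q,\varepsilon)=1$, $w^*(q,\alpha\sigma)=w^*(q,\alpha)\cdot w(q\alpha,\sigma)$. $A$ recognizes $\mathcal{A}(\alpha)=i_u\cdot w^*(u,\alpha)\cdot\rho(u\alpha)$, and for $q\in Q$, $\mathcal{A}_q(\alpha)=w^*(q,\alpha)\cdot\rho(q\alpha)$. For $m\in M$, $(m\cdot\ell)(\gamma)=m\cdot\ell(\gamma)$. Two $M$-DFAs are equivalent if they recognize the same $M$-language; $A$ is minimal if no equivalent $M$-DFA has fewer states; $A$ is accessible if $Q=\{u\alpha\mid\alpha\in\Sigma^*\}$. *)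

theory Defs
  imports Main
begin

text \<open>An M-DFA over the finite alphabet given by the finite type 'a, with state
  set Q (a finite nonempty subset of the type 'q) and weights in the monoid 'm.\<close>

record ('q, 'a, 'm) mdfa =
  states :: "'q set"
  init   :: "'q"
  ival   :: "'m"
  trans  :: "'q \<Rightarrow> 'a \<Rightarrow> 'q"
  wt     :: "'q \<Rightarrow> 'a \<Rightarrow> 'm"
  fin    :: "'q \<Rightarrow> 'm"

definition wf_mdfa :: "('q, 'a, 'm) mdfa \<Rightarrow> bool" where
  "wf_mdfa A \<longleftrightarrow> finite (states A) \<and> states A \<noteq> {} \<and> init A \<in> states A \<and>
     (\<forall>q\<in>states A. \<forall>\<sigma>. trans A q \<sigma> \<in> states A)"

definition dstar :: "('q, 'a, 'm) mdfa \<Rightarrow> 'q \<Rightarrow> 'a list \<Rightarrow> 'q" where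
  "dstar A q \<alpha> = foldl (trans A) q \<alpha>"

text \<open>w^*, defined on the reversed word so that the recursion is literally
  w^*(q, epsilon) = 1 and w^*(q, alpha sigma) = w^*(q, alpha) * w(q alpha, sigma).\<close>
fun wstar_rev :: "('q, 'a, 'm::monoid_mult) mdfa \<Rightarrow> 'q \<Rightarrow> 'a list \<Rightarrow> 'm" where
  "wstar_rev A q [] = 1"
| "wstar_rev A q (\<sigma> # \<beta>) = wstar_rev A q \<beta> * wt A (dstar A q (rev \<beta>)) \<sigma>"

definition wstar :: "('q, 'a, 'm::monoid_mult) mdfa \<Rightarrow> 'q \<Rightarrow> 'a list \<Rightarrow> 'm" where
  "wstar A q \<alpha> = wstar_rev A q (rev \<alpha>)"

definition lang :: "('q, 'a, 'm::monoid_mult) mdfa \<Rightarrow> 'a list \<Rightarrow> 'm" where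
  "lang A \<alpha> = ival A * wstar A (init A) \<alpha> * fin A (dstar A (init A) \<alpha>)"

definition state_lang :: "('q, 'a, 'm::monoid_mult) mdfa \<Rightarrow> 'q \<Rightarrow> 'a list \<Rightarrow> 'm" where
  "state_lang A q \<alpha> = wstar A q \<alpha> * fin A (dstar A q \<alpha>)"

definition lscale :: "'m::monoid_mult \<Rightarrow> ('a list \<Rightarrow> 'm) \<Rightarrow> 'a list \<Rightarrow> 'm" where
  "lscale m l \<gamma> = m * l \<gamma>"

definition equivalent :: "('q, 'a, 'm::monoid_mult) mdfa \<Rightarrow> ('r, 'a, 'm) mdfa \<Rightarrow> bool" where
  "equivalent A B \<longleftrightarrow> lang A = lang B"

text \<open>Competitors range over
  M-DFAs whose states live in the same type 'q; this loses nothing, since any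
  M-DFA with fewer than card Q states can be renamed injectively into 'q.\<close>
definition minimal :: "('q, 'a, 'm::monoid_mult) mdfa \<Rightarrow> bool" where
  "minimal A \<longleftrightarrow> wf_mdfa A \<and>
     \<not> (\<exists>B :: ('q, 'a, 'm) mdfa. wf_mdfa B \<and> equivalent B A \<and> card (states B) < card (states A))"

definition accessible :: "('q, 'a, 'm) mdfa \<Rightarrow> bool" where
  "accessible A \<longleftrightarrow> states A = {dstar A (init A) \<alpha> | \<alpha>. True}"

end

theory Submission
  imports Defs
begin

lemma dstar_Cons[simp]: "dstar A q (s # g) = dstar A (trans A q s) g"
  by (simp add: dstar_def)

lemma dstar_Nil[simp]: "dstar A q [] = q"
  by (simp add: dstar_def)

lemma dstar_append: "dstar A q (a @ b) = dstar A (dstar A q a) b"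
  by (simp add: dstar_def)

lemma wstar_snoc: "wstar A q (a @ [s]) = wstar A q a * wt A (dstar A q a) s"
  by (simp add: wstar_def)

lemma wstar_Nil[simp]: "wstar A q [] = 1"
  by (simp add: wstar_def)

lemma wstar_append: "wstar A q (a @ b) = wstar A q a * wstar A (dstar A q a) b"
proof (induction b rule: rev_induct)
  case Nil then show ?case by simp
next
  case (snoc x xs)
  have "wstar A q (a @ xs @ [x]) = wstar A q (a @ xs) * wt A (dstar A q (a @ xs)) x"
    using wstar_snoc[of A q "a @ xs" x] by simp
  also have "\<dots> = wstar A q a * (wstar A (dstar A q a) xs * wt A (dstar A (dstar A q a) xs) x)"
    using snoc by (simp add: dstar_append mult.assoc)
  also have "\<dots> = wstar A q a * wstar A (dstar A q a) (xs @ [x])"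
    by (simp add: wstar_snoc)
  finally show ?case by simp
qed

lemma wstar_Cons: "wstar A q (s # g) = wt A q s * wstar A (trans A q s) g"
proof -
  have "wstar A q ([s] @ g) = wstar A q [s] * wstar A (dstar A q [s]) g"
    by (rule wstar_append)
  moreover have "wstar A q [s] = wt A q s"
    using wstar_snoc[of A q "[]" s] by simp
  ultimately show ?thesis by simp
qed

lemma sl_Nil: "state_lang A r [] = fin A r"
  by (simp add: state_lang_def)

lemma sl_Cons: "state_lang A r (s # g) = wt A r s * state_lang A (trans A r s) g"
  by (simp add: state_lang_def wstar_Cons mult.assoc)

lemma lang_sl: "lang A a = ival A * state_lang A (init A) a"
  by (simp add: lang_def state_lang_def mult.assoc)

lemma dstar_in: "wf_mdfa A \<Longrightarrow> q \<in> states A \<Longrightarrow> dstar A q a \<in> states A"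
  by (induction a arbitrary: q) (auto simp: wf_mdfa_def)

lemma merge_not_minimal:
  fixes A :: "('q, 'a, 'm::monoid_mult) mdfa"
  assumes wf: "wf_mdfa A" and p: "p \<in> states A" and q: "q \<in> states A" and pq: "p \<noteq> q"
    and eq: "lscale m (state_lang A p) = state_lang A q"
  shows "\<not> minimal A"
proof -
  define B where "B = \<lparr>states = states A - {q},
     init = (if init A = q then p else init A),
     ival = (if init A = q then ival A * m else ival A),
     trans = (\<lambda>r s. if trans A r s = q then p else trans A r s),
     wt = (\<lambda>r s. if trans A r s = q then wt A r s * m else wt A r s),
     fin = fin A\<rparr>"
  have eqg: "state_lang A q g = m * state_lang A p g" for g
    using eq by (metis lscale_def)
  have sl: "state_lang B r g = state_lang A r g" for r g
  proof (induction g arbitrary: r)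
    case Nil then show ?case by (simp add: sl_Nil B_def)
  next
    case (Cons s g)
    show ?case
    proof (cases "trans A r s = q")
      case True
      then show ?thesis using Cons
        by (simp add: sl_Cons B_def eqg mult.assoc)
    next
      case False
      then show ?thesis using Cons
        by (simp add: sl_Cons B_def)
    qed
  qed
  have "lang B = lang A"
  proof
    fix a
    show "lang B a = lang A a"
      unfolding lang_sl sl
      by (cases "init A = q") (simp_all add: B_def eqg mult.assoc)
  qed
  then have "equivalent B A" by (simp add: equivalent_def)
  moreover have "wf_mdfa B"
    using wf p q pq unfolding wf_mdfa_def B_def by auto
  moreover have "card (states B) < card (states A)"
  proof -
    have "finite (states A)" using wf unfolding wf_mdfa_def by simp
    from card_Diff1_less[OF this q] show ?thesis by (simp add: B_def)
  qed
  ultimately show ?thesis unfolding minimal_def by blast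
qed

lemma minimal_accessible:
  assumes "minimal A" shows "accessible A"
proof (rule ccontr)
  assume na: "\<not> accessible A"
  have wf: "wf_mdfa A" using assms unfolding minimal_def by simp
  define R where "R = {dstar A (init A) a | a. True}"
  have ini: "init A \<in> states A" using wf unfolding wf_mdfa_def by simp
  have sub: "R \<subseteq> states A" unfolding R_def using dstar_in[OF wf ini] by blast
  have ne: "R \<noteq> states A" using na unfolding accessible_def R_def by blast
  define B where "B = A\<lparr>states := R\<rparr>"
  have ws: "wstar_rev B q a = wstar_rev A q a" for q a
    by (induction a) (simp_all add: B_def dstar_def)
  have ds: "dstar B q a = dstar A q a" for q a by (simp add: B_def dstar_def)
  have "lang B = lang A"
    by (rule ext) (simp add: lang_def wstar_def ds ws, simp add: B_def)
  then have "equivalent B A" by (simp add: equivalent_def)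
  moreover have "wf_mdfa B"
  proof -
    have "init A = dstar A (init A) []" by simp
    then have "init A \<in> R" unfolding R_def by blast
    moreover have "\<forall>r\<in>R. \<forall>s. trans A r s \<in> R"
    proof (intro ballI allI)
      fix r s assume "r \<in> R"
      then obtain a where "r = dstar A (init A) a" unfolding R_def by blast
      then have "trans A r s = dstar A (init A) (a @ [s])" by (simp add: dstar_append)
      then show "trans A r s \<in> R" unfolding R_def by blast
    qed
    moreover have "finite R" using wf sub finite_subset unfolding wf_mdfa_def by blast
    ultimately show ?thesis unfolding wf_mdfa_def B_def by auto
  qed
  moreover have "card (states B) < card (states A)"
    using wf sub ne unfolding B_def wf_mdfa_def by (simp add: psubset_card_mono psubsetI)
  ultimately show False using assms unfolding minimal_def by (simp del: equivalent_def)
qed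

theorem mainTheorem8:
  fixes A :: "('q, 'a::finite, 'm::monoid_mult) mdfa"
  assumes "minimal A"
  shows "accessible A \<and>
    (\<forall>p\<in>states A. \<forall>q\<in>states A.
       (\<exists>m. lscale m (state_lang A p) = state_lang A q \<or> state_lang A p = lscale m (state_lang A q))
       \<longrightarrow> p = q) \<and>
    (\<forall>p\<in>states A. \<forall>q\<in>states A. state_lang A p = state_lang A q \<longrightarrow> p = q)"
proof -
  have wf: "wf_mdfa A" using assms unfolding minimal_def by simp
  have two: "\<forall>p\<in>states A. \<forall>q\<in>states A.
       (\<exists>m. lscale m (state_lang A p) = state_lang A q \<or> state_lang A p = lscale m (state_lang A q))
       \<longrightarrow> p = q"
  proof (intro ballI impI)
    fix p q assume p: "p \<in> states A" and q: "q \<in> states A"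
      and "\<exists>m. lscale m (state_lang A p) = state_lang A q \<or> state_lang A p = lscale m (state_lang A q)"
    then obtain m where "lscale m (state_lang A p) = state_lang A q \<or> state_lang A p = lscale m (state_lang A q)" by blast
    then show "p = q"
    proof
      assume "lscale m (state_lang A p) = state_lang A q"
      then show "p = q" using merge_not_minimal[OF wf p q, of m] assms by (cases "p = q") simp_all
    next
      assume "state_lang A p = lscale m (state_lang A q)"
      then show "p = q" using merge_not_minimal[OF wf q p, of m] assms by (cases "p = q") simp_all
    qed
  qed
  have l1: "lscale 1 l = l" for l :: "'a list \<Rightarrow> 'm" by (rule ext) (simp add: lscale_def)
  have three: "\<forall>p\<in>states A. \<forall>q\<in>states A. state_lang A p = state_lang A q \<longrightarrow> p = q"
  proof (intro ballI impI)
    fix p q assume "p \<in> states A" "q \<in> states A" "state_lang A p = state_lang A q"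
    then have "lscale 1 (state_lang A p) = state_lang A q" using l1[of "state_lang A p"] by simp
    then show "p = q" using two \<open>p \<in> states A\<close> \<open>q \<in> states A\<close> by blast
  qed
  show ?thesis using minimal_accessible[OF assms] two three by (intro conjI)
qed

end
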